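(* Assume $M$ is a message set whose communication topology $G_M$ is an oriented ring, and let $S=(P_1,\dots,P_N)$ be a $1$-synchronizable $M$-system. Then for every $\tau\in T_\omega(S)$ there is a normalized trace $\tau_N\in T_\omega(S)$ such that $\tau\equiv_S\tau_N$.
   Context: A message set $M=(\Sigma_M,N,\mathrm{src},\mathrm{dst})$: finite set of messages, $N\ge1$ peers, $\mathrm{src}(a)\neq\mathrm{dst}(a)\in\{1,\dots,N\}$. Its communication topology $G_M$ is the directed graph on $\{1,\dots,N\}$ with an edge $i\to j$ iff some message $a$ has $\mathrm{src}(a)=i$, $\mathrm{dst}(a)=j$; $G_M$ is an oriented ring if its edge set is exactly $\{(i,j)\mid j=i+1 \bmod N\}$. Actions $!a$ (by peer $\mathrm{src}(a)$), $?a$ (by peer $\mathrm{dst}(a)$); traces are finite action sequences; $!?a$ abbreviates $!a\cdot?a$. For a trace $\tau$, $\pi_!(\tau)$ is the sequence of sent messages; $\mathrm{buf}_{i\to j}(\tau)$ is the word $w$ (if any) with (sent on $i\to j$) $=$ (received on $i\to j$)$\cdot w$. $\tau$ is FIFO ($k$-bounded FIFO) if for all $i,j$ and prefixes $\tau'$, $\mathrm{buf}_{i\to j}(\tau')$ is defined (and has length $\le k$); synchronous if of the form $!?a_1\cdots!?a_k$. A trace is normalized if it is of the form $\tau_0\cdot !a_1\cdots !a_n$ with $\tau_0$ synchronous, $n\ge0$, $a_1,\dots,a_n\in\Sigma_M$. A system $S=(P_1,\dots,P_N)$: finite automata $P_i$ (all states accepting) over actions of peer $i$, with one FIFO channel per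 ordered pair $i\neq j$. A configuration: one control state per peer and contents $w_{i,j}$ of channels; stable if all channels empty. $!a$ ($\mathrm{src}(a)=i,\mathrm{dst}(a)=j$) moves $P_i$ and appends $a$ to $w_{i,j}$; $?a$ moves $P_j$ and removes $a$ from the head of $w_{i,j}$; $c_0$ is the initial configuration. $T_k(S)$ ($k\ge1$): $k$-bounded FIFO traces $\tau$ with $c_0\xrightarrow{\tau}c$ for some $c$; $T_0(S)$: synchronous such traces; $T_\omega(S)=\bigcup_kT_k(S)$. $\tau_1\equiv_S\tau_2$ iff $\tau_1,\tau_2\in T_\omega(S)$ and there is $c$ with $c_0\xrightarrow{\tau_1}c$ and $c_0\xrightarrow{\tau_2}c$. $ST_k(S)=\{\pi_!(\tau)\mid\tau\in T_k(S)\}\cup\{(\pi_!(\tau),c)\mid c_0\xrightarrow{\tau}c,\ c\text{ stable},\ \tau\in T_k(S)\}$; $S$ is $1$-synchronizable if $ST_0(S)=ST_1(S)$. *)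

theory Defs
  imports Main
begin

record 'm msgset =
  msgs :: "'m set"
  npeers :: nat
  src :: "'m \<Rightarrow> nat"
  dst :: "'m \<Rightarrow> nat"

definition is_msgset :: "'m msgset \<Rightarrow> bool" where
  "is_msgset M \<longleftrightarrow> finite (msgs M) \<and> npeers M \<ge> 1 \<and>
     (\<forall>a \<in> msgs M. src M a \<noteq> dst M a \<and> src M a \<in> {1..npeers M} \<and> dst M a \<in> {1..npeers M})"

definition topology :: "'m msgset \<Rightarrow> (nat \<times> nat) set" where
  "topology M = {(src M a, dst M a) | a. a \<in> msgs M}"

text \<open>Peers are 1..N; the successor of i on the ring is i+1 (mod N), i.e. N goes to 1.\<close>
definition oriented_ring :: "'m msgset \<Rightarrow> bool" where
  "oriented_ring M \<longleftrightarrow> topology M = {(i, i mod npeers M + 1) | i. i \<in> {1..npeers M}}"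

datatype 'm action = Send 'm | Recv 'm

fun msg_of :: "'m action \<Rightarrow> 'm" where
  "msg_of (Send a) = a" | "msg_of (Recv a) = a"

fun peer_of :: "'m msgset \<Rightarrow> 'm action \<Rightarrow> nat" where
  "peer_of M (Send a) = src M a" | "peer_of M (Recv a) = dst M a"

fun pi_send :: "'m action list \<Rightarrow> 'm list" where
  "pi_send [] = []"
| "pi_send (Send a # t) = a # pi_send t"
| "pi_send (Recv a # t) = pi_send t"

fun pi_recv :: "'m action list \<Rightarrow> 'm list" where
  "pi_recv [] = []"
| "pi_recv (Send a # t) = pi_recv t"
| "pi_recv (Recv a # t) = a # pi_recv t"

definition sent_on :: "'m msgset \<Rightarrow> nat \<Rightarrow> nat \<Rightarrow> 'm action list \<Rightarrow> 'm list" where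
  "sent_on M i j t = filter (\<lambda>a. src M a = i \<and> dst M a = j) (pi_send t)"

definition recv_on :: "'m msgset \<Rightarrow> nat \<Rightarrow> nat \<Rightarrow> 'm action list \<Rightarrow> 'm list" where
  "recv_on M i j t = filter (\<lambda>a. src M a = i \<and> dst M a = j) (pi_recv t)"

definition buf :: "'m msgset \<Rightarrow> nat \<Rightarrow> nat \<Rightarrow> 'm action list \<Rightarrow> 'm list option" where
  "buf M i j t = (if \<exists>w. sent_on M i j t = recv_on M i j t @ w
                  then Some (drop (length (recv_on M i j t)) (sent_on M i j t)) else None)"

definition is_fifo :: "'m msgset \<Rightarrow> 'm action list \<Rightarrow> bool" where
  "is_fifo M t \<longleftrightarrow> (\<forall>i j n. n \<le> length t \<longrightarrow> buf M i j (take n t) \<noteq> None)"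

definition is_k_fifo :: "'m msgset \<Rightarrow> nat \<Rightarrow> 'm action list \<Rightarrow> bool" where
  "is_k_fifo M k t \<longleftrightarrow>
     (\<forall>i j n. n \<le> length t \<longrightarrow> (\<exists>w. buf M i j (take n t) = Some w \<and> length w \<le> k))"

definition is_sync :: "'m action list \<Rightarrow> bool" where
  "is_sync t \<longleftrightarrow> (\<exists>as. t = concat (map (\<lambda>a. [Send a, Recv a]) as))"

definition normalized :: "'m msgset \<Rightarrow> 'm action list \<Rightarrow> bool" where
  "normalized M t \<longleftrightarrow> (\<exists>t0 as. is_sync t0 \<and> set as \<subseteq> msgs M \<and> t = t0 @ map Send as)"

text \<open>Peer i is a finite automaton with state set states S i, initial state init S i and
  transition relation trans S i; all states are accepting.\<close>
record ('m, 's) system =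
  states :: "nat \<Rightarrow> 's set"
  init :: "nat \<Rightarrow> 's"
  trans :: "nat \<Rightarrow> ('s \<times> 'm action \<times> 's) set"

definition is_system :: "'m msgset \<Rightarrow> ('m, 's) system \<Rightarrow> bool" where
  "is_system M S \<longleftrightarrow>
     (\<forall>i \<in> {1..npeers M}. finite (states S i) \<and> init S i \<in> states S i \<and>
        finite (trans S i) \<and>
        (\<forall>q x q'. (q, x, q') \<in> trans S i \<longrightarrow>
            q \<in> states S i \<and> q' \<in> states S i \<and> msg_of x \<in> msgs M \<and> peer_of M x = i)) \<and>
     (\<forall>i. i \<notin> {1..npeers M} \<longrightarrow> trans S i = {})"

type_synonym ('m, 's) config = "(nat \<Rightarrow> 's) \<times> (nat \<Rightarrow> nat \<Rightarrow> 'm list)"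

definition conf0 :: "('m, 's) system \<Rightarrow> ('m, 's) config" where
  "conf0 S = (init S, \<lambda>i j. [])"

definition stable :: "('m, 's) config \<Rightarrow> bool" where
  "stable c \<longleftrightarrow> (\<forall>i j. snd c i j = [])"

definition step :: "'m msgset \<Rightarrow> ('m, 's) system \<Rightarrow> ('m, 's) config \<Rightarrow> 'm action
                    \<Rightarrow> ('m, 's) config \<Rightarrow> bool" where
  "step M S c x c' \<longleftrightarrow> (case x of
      Send a \<Rightarrow> (let i = src M a; j = dst M a in
         (fst c i, x, fst c' i) \<in> trans S i \<and> fst c' = (fst c)(i := fst c' i) \<and>
         snd c' = (snd c)(i := (snd c i)(j := snd c i j @ [a])))
    | Recv a \<Rightarrow> (let i = src M a; j = dst M a in
         (fst c j, x, fst c' j) \<in> trans S j \<and> fst c' = (fst c)(j := fst c' j) \<and>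
         snd c i j = a # snd c' i j \<and>
         snd c' = (snd c)(i := (snd c i)(j := snd c' i j))))"

fun run :: "'m msgset \<Rightarrow> ('m, 's) system \<Rightarrow> ('m, 's) config \<Rightarrow> 'm action list
             \<Rightarrow> ('m, 's) config \<Rightarrow> bool" where
  "run M S c [] c' \<longleftrightarrow> c' = c"
| "run M S c (x # t) c' \<longleftrightarrow> (\<exists>c''. step M S c x c'' \<and> run M S c'' t c')"

definition reachable_trace :: "'m msgset \<Rightarrow> ('m, 's) system \<Rightarrow> 'm action list \<Rightarrow> bool" where
  "reachable_trace M S t \<longleftrightarrow> (\<exists>c. run M S (conf0 S) t c)"

definition T :: "'m msgset \<Rightarrow> ('m, 's) system \<Rightarrow> nat \<Rightarrow> 'm action list set" where
  "T M S k = {t. reachable_trace M S t \<and> (if k = 0 then is_sync t else is_k_fifo M k t)}"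

definition T_omega :: "'m msgset \<Rightarrow> ('m, 's) system \<Rightarrow> 'm action list set" where
  "T_omega M S = (\<Union>k \<in> {1..}. T M S k)"

definition equiv_S :: "'m msgset \<Rightarrow> ('m, 's) system \<Rightarrow> 'm action list \<Rightarrow> 'm action list \<Rightarrow> bool" where
  "equiv_S M S t1 t2 \<longleftrightarrow> t1 \<in> T_omega M S \<and> t2 \<in> T_omega M S \<and>
     (\<exists>c. run M S (conf0 S) t1 c \<and> run M S (conf0 S) t2 c)"

definition ST :: "'m msgset \<Rightarrow> ('m, 's) system \<Rightarrow> nat
                  \<Rightarrow> ('m list + ('m list \<times> ('m, 's) config)) set" where
  "ST M S k = {Inl (pi_send t) | t. t \<in> T M S k} \<union>
              {Inr (pi_send t, c) | t c. run M S (conf0 S) t c \<and> stable c \<and> t \<in> T M S k}"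

definition synchronizable1 :: "'m msgset \<Rightarrow> ('m, 's) system \<Rightarrow> bool" where
  "synchronizable1 M S \<longleftrightarrow> ST M S 0 = ST M S 1"

end

theory Submission imports Defs begin

definition lproj :: "'m msgset \<Rightarrow> nat \<Rightarrow> 'm action list \<Rightarrow> 'm action list" where
  "lproj M p t = filter (\<lambda>x. peer_of M x = p) t"

fun lpath :: "('m, 's) system \<Rightarrow> nat \<Rightarrow> 's \<Rightarrow> 'm action list \<Rightarrow> 's \<Rightarrow> bool" where
  "lpath S p q [] q' \<longleftrightarrow> q' = q"
| "lpath S p q (x # w) q' \<longleftrightarrow> (\<exists>q''. (q, x, q'') \<in> trans S p \<and> lpath S p q'' w q')"

lemma lpath_append: "lpath S p q (u @ w) q' \<longleftrightarrow> (\<exists>m. lpath S p q u m \<and> lpath S p m w q')"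
  by (induction u arbitrary: q) auto

definition chstep :: "'m msgset \<Rightarrow> (nat \<Rightarrow> nat \<Rightarrow> 'm list) \<Rightarrow> 'm action \<Rightarrow> (nat \<Rightarrow> nat \<Rightarrow> 'm list) option" where
  "chstep M ch x = (case x of
      Send a \<Rightarrow> Some (ch(src M a := (ch (src M a))(dst M a := ch (src M a) (dst M a) @ [a])))
    | Recv a \<Rightarrow> (case ch (src M a) (dst M a) of [] \<Rightarrow> None
                 | y # ys \<Rightarrow> if y = a then Some (ch(src M a := (ch (src M a))(dst M a := ys))) else None))"

fun chans :: "'m msgset \<Rightarrow> (nat \<Rightarrow> nat \<Rightarrow> 'm list) \<Rightarrow> 'm action list \<Rightarrow> (nat \<Rightarrow> nat \<Rightarrow> 'm list) option" where
  "chans M ch [] = Some ch"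
| "chans M ch (x # t) = (case chstep M ch x of None \<Rightarrow> None | Some ch' \<Rightarrow> chans M ch' t)"

lemma chans_append: "chans M ch (t1 @ t2) = (case chans M ch t1 of None \<Rightarrow> None | Some c \<Rightarrow> chans M c t2)"
  by (induction t1 arbitrary: ch) (auto split: option.splits)

lemma step_iff: "step M S c x c'' \<longleftrightarrow>
   (fst c (peer_of M x), x, fst c'' (peer_of M x)) \<in> trans S (peer_of M x) \<and>
   fst c'' = (fst c)(peer_of M x := fst c'' (peer_of M x)) \<and> chstep M (snd c) x = Some (snd c'')"
proof (cases x)
  case (Send a)
  then show ?thesis by (auto simp: step_def chstep_def Let_def)
next
  case (Recv a)
  then show ?thesis
    apply (auto simp: step_def chstep_def Let_def split: list.splits if_splits)
     apply (metis fun_upd_same)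
    by (metis fun_upd_same)
qed

lemma run_iff: "run M S c t c' \<longleftrightarrow>
   (\<forall>p. lpath S p (fst c p) (lproj M p t) (fst c' p)) \<and> chans M (snd c) t = Some (snd c')"
proof (induction t arbitrary: c)
  case Nil
  then show ?case by (auto simp: lproj_def prod_eq_iff)
next
  case (Cons x t)
  let ?r = "peer_of M x"
  show ?case
  proof
    assume "run M S c (x # t) c'"
    then obtain c'' where st: "step M S c x c''" and r: "run M S c'' t c'" by auto
    from r Cons.IH have ih: "\<forall>p. lpath S p (fst c'' p) (lproj M p t) (fst c' p)"
      and ch: "chans M (snd c'') t = Some (snd c')" by auto
    from st have tr: "(fst c ?r, x, fst c'' ?r) \<in> trans S ?r"
      and fs: "fst c'' = (fst c)(?r := fst c'' ?r)" and cs: "chstep M (snd c) x = Some (snd c'')"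
      by (auto simp: step_iff)
    have "lpath S p (fst c p) (lproj M p (x # t)) (fst c' p)" for p
    proof (cases "p = ?r")
      case True
      then show ?thesis using tr ih by (auto simp: lproj_def)
    next
      case False
      then have e: "fst c'' p = fst c p" using fs by (metis fun_upd_other)
      have "lpath S p (fst c'' p) (lproj M p t) (fst c' p)" using ih by blast
      then show ?thesis using False e by (simp add: lproj_def)
    qed
    moreover have "chans M (snd c) (x # t) = Some (snd c')" using cs ch by simp
    ultimately show "(\<forall>p. lpath S p (fst c p) (lproj M p (x # t)) (fst c' p)) \<and>
        chans M (snd c) (x # t) = Some (snd c')" by blast
  next
    assume H: "(\<forall>p. lpath S p (fst c p) (lproj M p (x # t)) (fst c' p)) \<and>
        chans M (snd c) (x # t) = Some (snd c')"
    then obtain ch'' where cs: "chstep M (snd c) x = Some ch''" and ch: "chans M ch'' t = Some (snd c')"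
      by (auto split: option.splits)
    from H have "lpath S ?r (fst c ?r) (x # lproj M ?r t) (fst c' ?r)"
      by (metis (mono_tags, lifting) filter.simps(2) lproj_def)
    then obtain q where tr: "(fst c ?r, x, q) \<in> trans S ?r" and lq: "lpath S ?r q (lproj M ?r t) (fst c' ?r)"
      by auto
    define c'' where "c'' = ((fst c)(?r := q), ch'')"
    have "step M S c x c''" using tr cs by (simp add: step_iff c''_def)
    moreover have "run M S c'' t c'"
    proof -
      have "lpath S p (fst c'' p) (lproj M p t) (fst c' p)" for p
      proof (cases "p = ?r")
        case True then show ?thesis using lq by (simp add: c''_def)
      next
        case False
        then have "lproj M p (x # t) = lproj M p t" by (simp add: lproj_def)
        moreover have "lpath S p (fst c p) (lproj M p (x # t)) (fst c' p)" using H by blast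
        ultimately show ?thesis using False by (simp add: c''_def)
      qed
      then show ?thesis using Cons.IH ch by (simp add: c''_def)
    qed
    ultimately show "run M S c (x # t) c'" by (metis run.simps(2))
  qed
qed

lemma run_append: "run M S c (t1 @ t2) c' \<longleftrightarrow> (\<exists>m. run M S c t1 m \<and> run M S m t2 c')"
  by (induction t1 arbitrary: c) auto


lemma pi_send_append[simp]: "pi_send (u @ w) = pi_send u @ pi_send w"
  by (induction u rule: pi_send.induct) auto

lemma pi_recv_append[simp]: "pi_recv (u @ w) = pi_recv u @ pi_recv w"
  by (induction u rule: pi_recv.induct) auto

lemma run_chan_inv:
  "run M S c t c' \<Longrightarrow> snd c i j @ sent_on M i j t = recv_on M i j t @ snd c' i j"
proof (induction t arbitrary: c)
  case Nil
  then show ?case by (simp add: sent_on_def recv_on_def)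
next
  case (Cons x t)
  then obtain c'' where st: "step M S c x c''" and r: "run M S c'' t c'" by auto
  have ih: "snd c'' i j @ sent_on M i j t = recv_on M i j t @ snd c' i j" using Cons.IH r by blast
  show ?case
  proof (cases x)
    case (Send a)
    then have "snd c'' = (snd c)(src M a := (snd c (src M a))(dst M a := snd c (src M a) (dst M a) @ [a]))"
      using st by (simp add: step_def Let_def)
    then show ?thesis using ih Send by (auto simp: sent_on_def recv_on_def split: if_splits)
  next
    case (Recv a)
    then have h1: "snd c (src M a) (dst M a) = a # snd c'' (src M a) (dst M a)"
      and h2: "snd c'' = (snd c)(src M a := (snd c (src M a))(dst M a := snd c'' (src M a) (dst M a)))"
      using st by (simp_all add: step_def Let_def)
    show ?thesis
    proof (cases "src M a = i \<and> dst M a = j")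
      case True
      then show ?thesis using ih Recv h1 by (auto simp: sent_on_def recv_on_def)
    next
      case False
      then have "snd c'' i j = snd c i j" using h2 by (metis fun_upd_apply)
      then show ?thesis using ih Recv False by (auto simp: sent_on_def recv_on_def)
    qed
  qed
qed

lemma buf_Some: "sent_on M i j t = recv_on M i j t @ w \<Longrightarrow> buf M i j t = Some w"
  by (auto simp: buf_def)

lemma conf0_simps[simp]: "fst (conf0 S) = init S" "snd (conf0 S) = (\<lambda>i j. [])"
  by (auto simp: conf0_def)

lemma run_prefix: "run M S c t c' \<Longrightarrow> \<exists>m. run M S c (take n t) m"
  by (metis append_take_drop_id run_append)

lemma length_pi_send: "length (pi_send t) \<le> length t"
  by (induction t rule: pi_send.induct) auto

lemma reach_Tomega: "run M S (conf0 S) t c \<Longrightarrow> t \<in> T_omega M S"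
proof -
  assume r: "run M S (conf0 S) t c"
  have "is_k_fifo M (Suc (length t)) t"
    unfolding is_k_fifo_def
  proof (intro allI impI)
    fix i j n assume n: "n \<le> length t"
    obtain m where rm: "run M S (conf0 S) (take n t) m" using run_prefix r by blast
    have e: "sent_on M i j (take n t) = recv_on M i j (take n t) @ snd m i j"
      using run_chan_inv[OF rm, of i j] by simp
    have "length (snd m i j) \<le> length (sent_on M i j (take n t))" using e by simp
    also have "\<dots> \<le> length (pi_send (take n t))" by (simp add: sent_on_def)
    also have "\<dots> \<le> length (take n t)" by (rule length_pi_send)
    also have "\<dots> \<le> length t" by simp
    finally show "\<exists>w. buf M i j (take n t) = Some w \<and> length w \<le> Suc (length t)"
      using buf_Some[OF e] by auto
  qed
  moreover have "reachable_trace M S t" using r unfolding reachable_trace_def by blast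
  ultimately have "t \<in> T M S (Suc (length t))" by (auto simp: T_def)
  then show ?thesis by (auto simp: T_omega_def)
qed

fun okb :: "'m msgset \<Rightarrow> nat \<Rightarrow> (nat \<Rightarrow> nat \<Rightarrow> 'm list) \<Rightarrow> 'm action list \<Rightarrow> bool" where
  "okb M K ch [] \<longleftrightarrow> (\<forall>i j. length (ch i j) \<le> K)"
| "okb M K ch (x # t) \<longleftrightarrow> (\<forall>i j. length (ch i j) \<le> K) \<and>
     (case chstep M ch x of None \<Rightarrow> False | Some ch' \<Rightarrow> okb M K ch' t)"

lemma okb_append: "okb M K ch t1 \<Longrightarrow> chans M ch t1 = Some ch1 \<Longrightarrow> okb M K ch1 t2 \<Longrightarrow> okb M K ch (t1 @ t2)"
  by (induction t1 arbitrary: ch) (auto split: option.splits)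

lemma okb_take: "okb M K ch t \<Longrightarrow> n \<le> length t \<Longrightarrow>
   \<exists>ch'. chans M ch (take n t) = Some ch' \<and> (\<forall>i j. length (ch' i j) \<le> K)"
proof (induction t arbitrary: ch n)
  case Nil
  then show ?case by auto
next
  case (Cons x t)
  show ?case
  proof (cases n)
    case 0
    then show ?thesis using Cons.prems by auto
  next
    case (Suc n')
    from Cons.prems obtain ch' where "chstep M ch x = Some ch'" "okb M K ch' t"
      by (auto split: option.splits)
    then show ?thesis using Cons.IH[of ch' n'] Suc Cons.prems(2) by auto
  qed
qed

lemma okb_kfifo: "run M S (conf0 S) t c \<Longrightarrow> okb M K (\<lambda>i j. []) t \<Longrightarrow> is_k_fifo M K t"
  unfolding is_k_fifo_def
proof (intro allI impI)
  fix i j n assume r: "run M S (conf0 S) t c" and ok: "okb M K (\<lambda>i j. []) t" and n: "n \<le> length t"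
  obtain m where rm: "run M S (conf0 S) (take n t) m" using run_prefix r by blast
  have e: "sent_on M i j (take n t) = recv_on M i j (take n t) @ snd m i j"
    using run_chan_inv[OF rm, of i j] by simp
  obtain ch' where "chans M (\<lambda>i j. []) (take n t) = Some ch'" "\<forall>i j. length (ch' i j) \<le> K"
    using okb_take[OF ok n] by blast
  moreover have "chans M (\<lambda>i j. []) (take n t) = Some (snd m)" using rm run_iff[of M S "conf0 S"] by simp
  ultimately show "\<exists>w. buf M i j (take n t) = Some w \<and> length w \<le> K"
    using buf_Some[OF e] by auto
qed


definition sw :: "'m list \<Rightarrow> 'm action list" where
  "sw as = concat (map (\<lambda>a. [Send a, Recv a]) as)"

lemma sw_simps[simp]: "sw [] = []" "sw (a # as) = Send a # Recv a # sw as" "sw (xs @ ys) = sw xs @ sw ys"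
  by (auto simp: sw_def)

lemma pi_send_sw[simp]: "pi_send (sw as) = as"
  by (induction as) auto

lemma pi_send_map_Send[simp]: "pi_send (map Send us) = us"
  by (induction us) auto

lemma is_sync_sw: "is_sync t \<Longrightarrow> t = sw (pi_send t)"
  by (auto simp: is_sync_def sw_def[symmetric])

lemma is_sync_sw': "is_sync (sw as)"
  by (auto simp: is_sync_def sw_def)

lemma syncI:
  assumes "synchronizable1 M S" "t \<in> T M S 1"
  shows "\<exists>c. run M S (conf0 S) (sw (pi_send t)) c"
proof -
  have "Inl (pi_send t) \<in> ST M S 1" using assms(2) by (auto simp: ST_def)
  then have "Inl (pi_send t) \<in> ST M S 0" using assms(1) by (simp add: synchronizable1_def)
  then obtain t' where t': "pi_send t' = pi_send t" "t' \<in> T M S 0" by (auto simp: ST_def)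
  then have "is_sync t'" "reachable_trace M S t'" by (auto simp: T_def)
  then show ?thesis using t' is_sync_sw by (metis reachable_trace_def)
qed

lemma syncII:
  assumes "synchronizable1 M S" "t \<in> T M S 1" "run M S (conf0 S) t c" "stable c"
  shows "run M S (conf0 S) (sw (pi_send t)) c"
proof -
  have "Inr (pi_send t, c) \<in> ST M S 1" using assms(2-4) unfolding ST_def by blast
  then have "Inr (pi_send t, c) \<in> ST M S 0" using assms(1) by (simp add: synchronizable1_def)
  then obtain t' where t': "pi_send t' = pi_send t" "t' \<in> T M S 0" "run M S (conf0 S) t' c"
    by (auto simp: ST_def)
  then have "is_sync t'" by (auto simp: T_def)
  then show ?thesis using t' is_sync_sw by metis
qed

lemma chans_sw:
  "(\<forall>a\<in>set xs. ch (src M a) (dst M a) = []) \<Longrightarrow> chans M ch (sw xs) = Some ch"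
proof (induction xs)
  case Nil then show ?case by simp
next
  case (Cons a xs)
  then have e: "ch (src M a) (dst M a) = []" by simp
  have "ch(src M a := (ch (src M a))(dst M a := [])) = ch" using e by (auto simp: fun_eq_iff)
  then show ?case using Cons e by (simp add: chstep_def)
qed

lemma okb_sw:
  "(\<forall>a\<in>set xs. ch (src M a) (dst M a) = []) \<Longrightarrow> (\<forall>i j. length (ch i j) \<le> 1) \<Longrightarrow> okb M 1 ch (sw xs)"
proof (induction xs)
  case Nil then show ?case by simp
next
  case (Cons a xs)
  then have e: "ch (src M a) (dst M a) = []" by simp
  have r: "ch(src M a := (ch (src M a))(dst M a := [])) = ch" using e by (auto simp: fun_eq_iff)
  have "\<forall>i j. length ((ch(src M a := (ch (src M a))(dst M a := [a]))) i j) \<le> 1"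
    using Cons.prems(2) by auto
  then show ?case using Cons e r by (simp add: chstep_def)
qed

lemma chans_sends:
  "chans M ch (map Send us) = Some (\<lambda>k l. ch k l @ filter (\<lambda>a. src M a = k \<and> dst M a = l) us)"
proof (induction us arbitrary: ch)
  case Nil then show ?case by simp
next
  case (Cons a us)
  show ?case by (simp add: chstep_def Cons fun_eq_iff)
qed


lemma lproj_simps[simp]: "lproj M p [] = []"
  "lproj M p (x # t) = (if peer_of M x = p then x # lproj M p t else lproj M p t)"
  "lproj M p (u @ w) = lproj M p u @ lproj M p w"
  by (auto simp: lproj_def)

lemma lproj_map_Send: "lproj M p (map Send us) = map Send (filter (\<lambda>a. src M a = p) us)"
  by (induction us) auto

lemma lproj_sw_sender: "\<forall>a\<in>set w. src M a = j \<and> dst M a \<noteq> j \<Longrightarrow> lproj M j (sw w) = map Send w"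
  by (induction w) auto

lemma lpath_prefix: "lpath S p q (u @ w) q' \<Longrightarrow> \<exists>m. lpath S p q u m"
  using lpath_append by metis

lemma build_run:
  assumes "\<forall>p. \<exists>q. lpath S p (st p) (lproj M p t) q \<and> (p = j \<longrightarrow> q = q0)"
    and "chans M ch t = Some ch'"
  shows "\<exists>st'. run M S (st, ch) t (st', ch') \<and> st' j = q0"
proof -
  from assms(1) obtain f where f: "\<forall>p. lpath S p (st p) (lproj M p t) (f p) \<and> (p = j \<longrightarrow> f p = q0)"
    by metis
  then have "run M S (st, ch) t (f, ch')" using assms(2) by (simp add: run_iff)
  then show ?thesis using f by blast
qed

lemma okb_single: "(\<forall>i j. length (ch i j) \<le> K) \<Longrightarrow> chstep M ch x = Some ch' \<Longrightarrow>
   (\<forall>i j. length (ch' i j) \<le> K) \<Longrightarrow> okb M K ch [x]"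
  by simp

lemma lemC:
  assumes ms: "is_msgset M" and sy: "synchronizable1 M S"
    and bm: "b \<in> msgs M" and bi: "src M b = i" and bj: "dst M b = j"
    and v: "\<forall>a\<in>set v. src M a = j \<and> a \<in> msgs M"
    and hs0: "\<forall>p. \<exists>q. lpath S p (init S p) (lproj M p (sw s0)) q"
    and hi: "\<exists>q. lpath S i (init S i) (lproj M i (sw s0) @ [Send b]) q"
    and hj: "lpath S j (init S j) (lproj M j (sw s0) @ map Send v @ [Recv b]) q"
  shows "lpath S j (init S j) (lproj M j (sw s0) @ Recv b # map Send v) q"
proof -
  have ij: "i \<noteq> j" using ms bm bi bj by (auto simp: is_msgset_def)
  have vd: "\<forall>a\<in>set v. src M a = j \<and> dst M a \<noteq> j" using ms v by (auto simp: is_msgset_def)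
  define e :: "nat \<Rightarrow> nat \<Rightarrow> 'a list" where "e = (\<lambda>x y. [])"
  define E1 where "E1 = (\<lambda>x y. if x = i \<and> y = j then [b] else [])"
  have ce: "chans M e (sw s0) = Some e" by (rule chans_sw) (simp add: e_def)
  have oe: "okb M 1 e (sw s0)" by (rule okb_sw) (auto simp: e_def)
  have cb: "chstep M e (Send b) = Some E1" by (auto simp: chstep_def e_def E1_def bi bj fun_eq_iff)
  have ob: "okb M 1 e [Send b]" using cb by (auto simp: e_def E1_def)
  have E1v: "\<forall>a\<in>set w. E1 (src M a) (dst M a) = []" if "set w \<subseteq> set v" for w
    using that vd ij by (auto simp: E1_def)
  have E1b: "\<forall>x y. length (E1 x y) \<le> 1" by (auto simp: E1_def)
  have K1: "lproj M p (sw (s0 @ b # w)) = lproj M p (sw s0) @ (if p = i then [Send b] else []) @ lproj M p (sw w)"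
    if "p \<noteq> j" for p w using that bi bj by auto
  have Q: "k \<le> length v \<Longrightarrow> \<forall>p. p \<noteq> j \<longrightarrow> (\<exists>q. lpath S p (init S p) (lproj M p (sw (s0 @ b # take k v))) q)" for k
  proof (induction k)
    case 0
    show ?case
    proof (intro allI impI)
      fix p assume pj: "p \<noteq> j"
      show "\<exists>q. lpath S p (init S p) (lproj M p (sw (s0 @ b # take 0 v))) q"
      proof (cases "p = i")
        case True then show ?thesis using hi K1[OF pj, of "[]"] by simp
      next
        case False then show ?thesis using hs0 K1[OF pj, of "[]"] by simp
      qed
    qed
  next
    case (Suc k)
    then have kl: "k < length v" by simp
    have IH: "\<forall>p. p \<noteq> j \<longrightarrow> (\<exists>q. lpath S p (init S p) (lproj M p (sw (s0 @ b # take k v))) q)"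
      using Suc by simp
    define tr where "tr = sw s0 @ [Send b] @ sw (take k v) @ [Send (v ! k)]"
    have vk: "src M (v ! k) = j" using vd kl by auto
    have Tp: "lproj M p tr = lproj M p (sw (s0 @ b # take k v))" if "p \<noteq> j" for p
      using that bi bj vk by (simp add: tr_def)
    have tv: "take (Suc k) v = take k v @ [v ! k]" using kl by (simp add: take_Suc_conv_app_nth)
    have Tj: "lproj M j tr = lproj M j (sw s0) @ map Send (take (Suc k) v)"
      using ij bi vk tv lproj_sw_sender[of "take k v" M j] vd by (simp add: tr_def) (meson in_set_takeD)
    have "\<exists>q'. lpath S j (init S j) (lproj M j tr) q'"
    proof -
      have "lproj M j (sw s0) @ map Send v @ [Recv b] =
            (lproj M j (sw s0) @ map Send (take (Suc k) v)) @ (map Send (drop (Suc k) v) @ [Recv b])"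
        by (metis append.assoc append_take_drop_id map_append)
      then show ?thesis using hj Tj lpath_prefix by metis
    qed
    then have allp: "\<forall>p. \<exists>q'. lpath S p (init S p) (lproj M p tr) q'"
      using IH Tp by metis
    have ct1: "chans M E1 (sw (take k v)) = Some E1" by (rule chans_sw) (rule E1v, meson set_take_subset)
    have ot1: "okb M 1 E1 (sw (take k v))" by (rule okb_sw) (rule E1v, meson set_take_subset, rule E1b)
    obtain E2 where cE2: "chstep M E1 (Send (v ! k)) = Some E2" by (simp add: chstep_def)
    have E1vk: "E1 (src M (v ! k)) (dst M (v ! k)) = []" using vk ij by (simp add: E1_def)
    have "\<forall>x y. length (E2 x y) \<le> 1" using cE2 E1vk E1b by (auto simp: chstep_def)
    then have ok2: "okb M 1 E1 [Send (v ! k)]" using cE2 E1b by simp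
    have chT: "chans M e tr = Some E2" using ce cb ct1 cE2 by (simp add: tr_def chans_append)
    have okT: "okb M 1 e tr"
      unfolding tr_def
      apply (rule okb_append[OF oe ce])
      apply (rule okb_append[OF ob])
      using cb apply simp
      apply (rule okb_append[OF ot1 ct1 ok2])
      done
    obtain st' where "\<forall>p. lpath S p (init S p) (lproj M p tr) (st' p)" using allp by metis
    then have rT: "run M S (init S, e) tr (st', E2)" using chT by (simp add: run_iff)
    have cz: "conf0 S = (init S, e)" by (simp add: conf0_def e_def)
    have "tr \<in> T M S 1"
      using rT okb_kfifo[of M S tr "(st', E2)" 1] okT cz
      unfolding Defs.T_def reachable_trace_def e_def by auto
    from syncI[OF sy this] obtain c where "run M S (conf0 S) (sw (pi_send tr)) c" by blast
    moreover have "pi_send tr = s0 @ b # take (Suc k) v" using tv by (simp add: tr_def)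
    ultimately have "run M S (conf0 S) (sw (s0 @ b # take (Suc k) v)) c" by simp
    then have H: "\<forall>p. lpath S p (fst (conf0 S) p) (lproj M p (sw (s0 @ b # take (Suc k) v))) (fst c p)"
      using run_iff by blast
    show ?case using H by (metis conf0_simps(1))
  qed
  define tr where "tr = sw s0 @ [Send b] @ sw v @ [Recv b]"
  have Tp: "lproj M p tr = lproj M p (sw (s0 @ b # v))" if "p \<noteq> j" for p
    using that bi bj by (simp add: tr_def)
  have Tj: "lproj M j tr = lproj M j (sw s0) @ map Send v @ [Recv b]"
    using ij bi bj lproj_sw_sender[of v M j] vd by (simp add: tr_def)
  have allp: "\<forall>p. \<exists>q'. lpath S p (init S p) (lproj M p tr) q' \<and> (p = j \<longrightarrow> q' = q)"
  proof
    fix p show "\<exists>q'. lpath S p (init S p) (lproj M p tr) q' \<and> (p = j \<longrightarrow> q' = q)"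
    proof (cases "p = j")
      case True then show ?thesis using hj Tj by auto
    next
      case False then show ?thesis using Q[of "length v"] Tp by simp
    qed
  qed
  have ct1: "chans M E1 (sw v) = Some E1" by (rule chans_sw) (rule E1v, simp)
  have ot1: "okb M 1 E1 (sw v)" by (rule okb_sw) (rule E1v, simp, rule E1b)
  have cr: "chstep M E1 (Recv b) = Some e" by (auto simp: chstep_def E1_def e_def bi bj fun_eq_iff)
  have okr: "okb M 1 E1 [Recv b]" using cr E1b by (simp add: e_def)
  have chT: "chans M e tr = Some e" using ce cb ct1 cr by (simp add: tr_def chans_append)
  have okT: "okb M 1 e tr"
    unfolding tr_def
    apply (rule okb_append[OF oe ce])
    apply (rule okb_append[OF ob])
    using cb apply simp
    apply (rule okb_append[OF ot1 ct1 okr])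
    done
  obtain st' where rT: "run M S (init S, e) tr (st', e)" and st'j: "st' j = q"
    using build_run[OF allp chT] by blast
  have cz: "conf0 S = (init S, e)" by (simp add: conf0_def e_def)
  have TT: "tr \<in> T M S 1"
    using rT okb_kfifo[of M S tr "(st', e)" 1] okT cz
    unfolding Defs.T_def reachable_trace_def e_def by auto
  have stb: "stable (st', e)" by (simp add: stable_def e_def)
  have "run M S (conf0 S) (sw (pi_send tr)) (st', e)"
    using syncII[OF sy TT _ stb] rT cz by simp
  moreover have "pi_send tr = s0 @ b # v" by (simp add: tr_def)
  ultimately have "run M S (conf0 S) (sw (s0 @ b # v)) (st', e)" by simp
  then have "lpath S j (fst (conf0 S) j) (lproj M j (sw (s0 @ b # v))) (fst (st', e) j)"
    using run_iff by blast
  then have "lpath S j (fst (conf0 S) j) (lproj M j (sw (s0 @ b # v))) q"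
    using st'j by simp
  then have "lpath S j (init S j) (lproj M j (sw (s0 @ b # v))) q" by simp
  moreover have "lproj M j (sw (s0 @ b # v)) = lproj M j (sw s0) @ Recv b # map Send v"
    using ij bi bj lproj_sw_sender[of v M j] vd by simp
  ultimately show ?thesis by simp
qed


lemma trans_msg: "is_system M S \<Longrightarrow> (q, x, q') \<in> trans S p \<Longrightarrow> msg_of x \<in> msgs M"
proof -
  assume s: "is_system M S" and t: "(q, x, q') \<in> trans S p"
  show ?thesis
  proof (cases "p \<in> {1..npeers M}")
    case True
    then show ?thesis using s t unfolding is_system_def by blast
  next
    case False
    then have "trans S p = {}" using s unfolding is_system_def by blast
    then show ?thesis using t by simp
  qed
qed

lemma run_msgs: "is_system M S \<Longrightarrow> run M S c t c' \<Longrightarrow> x \<in> set t \<Longrightarrow> msg_of x \<in> msgs M"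
proof (induction t arbitrary: c)
  case Nil then show ?case by simp
next
  case (Cons y t)
  then obtain c'' where st: "step M S c y c''" and r: "run M S c'' t c'" by auto
  show ?case
  proof (cases "x = y")
    case True
    then show ?thesis using st Cons.prems(1) trans_msg by (metis step_iff)
  next
    case False
    then show ?thesis using Cons r by auto
  qed
qed

lemma ring_dst: "oriented_ring M \<Longrightarrow> a \<in> msgs M \<Longrightarrow> dst M a = src M a mod npeers M + 1"
proof -
  assume r: "oriented_ring M" and a: "a \<in> msgs M"
  have "(src M a, dst M a) \<in> topology M" using a unfolding topology_def by blast
  then have "(src M a, dst M a) \<in> {(i, i mod npeers M + 1) | i. i \<in> {1..npeers M}}"
    using r unfolding oriented_ring_def by simp
  then show ?thesis by auto
qed

lemma main_good:
  assumes ms: "is_msgset M" and ri: "oriented_ring M" and sys: "is_system M S"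
    and sy: "synchronizable1 M S"
  shows "run M S (conf0 S) tau c \<Longrightarrow> \<exists>s0 us. run M S (conf0 S) (sw s0 @ map Send us) c"
proof (induction tau arbitrary: c rule: rev_induct)
  case Nil
  then have "run M S (conf0 S) (sw [] @ map Send []) c" by simp
  then show ?case by blast
next
  case (snoc x tau)
  then obtain m where r1: "run M S (conf0 S) tau m" and r2: "run M S m [x] c"
    using run_append by metis
  from r2 have st: "step M S m x c" by auto
  obtain s0 us where R: "run M S (conf0 S) (sw s0 @ map Send us) m" using snoc.IH r1 by blast
  show ?case
  proof (cases x)
    case (Send a)
    have "run M S (conf0 S) ((sw s0 @ map Send us) @ [Send a]) c"
      using R r2 Send run_append by metis
    then have "run M S (conf0 S) (sw s0 @ map Send (us @ [a])) c" by simp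
    then show ?thesis by blast
  next
    case (Recv b)
    define i where "i = src M b"
    define j where "j = dst M b"
    define e :: "nat \<Rightarrow> nat \<Rightarrow> 'a list" where "e = (\<lambda>x y. [])"
    have ce: "chans M e (sw s0) = Some e" by (rule chans_sw) (simp add: e_def)
    have W: "\<forall>p. lpath S p (init S p) (lproj M p (sw s0) @ map Send (filter (\<lambda>a. src M a = p) us)) (fst m p)"
      using R by (simp add: run_iff lproj_map_Send)
    have "chans M e (sw s0 @ map Send us) = Some (snd m)"
      using R by (simp add: run_iff e_def)
    then have sm: "snd m = (\<lambda>k l. filter (\<lambda>a. src M a = k \<and> dst M a = l) us)"
      using ce chans_sends[of M e us] by (simp add: chans_append e_def)
    have musm: "set us \<subseteq> msgs M"
    proof
      fix a assume "a \<in> set us"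
      then have "Send a \<in> set (sw s0 @ map Send us)" by simp
      then show "a \<in> msgs M" using run_msgs[OF sys R] by fastforce
    qed
    from st Recv have trj: "(fst m j, Recv b, fst c j) \<in> trans S j"
      and fc: "fst c = (fst m)(j := fst c j)" and cs: "chstep M (snd m) (Recv b) = Some (snd c)"
      by (auto simp: step_iff j_def)
    have bm: "b \<in> msgs M" using trans_msg[OF sys trj] by simp
    have ij: "i \<noteq> j" using ms bm by (auto simp: is_msgset_def i_def j_def)
    obtain ys where hd: "snd m i j = b # ys" and sc: "snd c = (snd m)(i := (snd m i)(j := ys))"
      using cs by (auto simp: chstep_def i_def j_def split: list.splits if_splits)
    define P where "P = (\<lambda>a. src M a = i \<and> dst M a = j)"
    have "filter P us = b # ys" using hd sm by (simp add: P_def)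
    then obtain us1 us2 where us: "us = us1 @ b # us2" and n1: "\<forall>u\<in>set us1. \<not> P u"
      and ys: "ys = filter P us2"
      using filter_eq_ConsD by metis
    have n1i: "\<forall>u\<in>set us1. src M u \<noteq> i"
    proof
      fix u assume u: "u \<in> set us1"
      then have um: "u \<in> msgs M" using musm us by auto
      show "src M u \<noteq> i"
      proof
        assume "src M u = i"
        then have "dst M u = j" using ring_dst[OF ri um] ring_dst[OF ri bm] by (simp add: i_def j_def)
        then show False using n1 u \<open>src M u = i\<close> by (auto simp: P_def)
      qed
    qed
    define us' where "us' = us1 @ us2"
    have fi: "filter (\<lambda>a. src M a = i) us = b # filter (\<lambda>a. src M a = i) us2"
      using us n1i by (simp add: i_def)
    have fi': "filter (\<lambda>a. src M a = i) us' = filter (\<lambda>a. src M a = i) us2"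
      using n1i by (simp add: us'_def)
    have fp: "p \<noteq> i \<Longrightarrow> filter (\<lambda>a. src M a = p) us' = filter (\<lambda>a. src M a = p) us" for p
      using us by (auto simp: us'_def i_def)
    define v where "v = filter (\<lambda>a. src M a = j) us"
    have hs0: "\<forall>p. \<exists>q. lpath S p (init S p) (lproj M p (sw s0)) q"
      using W lpath_prefix by metis
    have hi: "\<exists>q. lpath S i (init S i) (lproj M i (sw s0) @ [Send b]) q"
    proof -
      have "lpath S i (init S i) ((lproj M i (sw s0) @ [Send b]) @ map Send (filter (\<lambda>a. src M a = i) us2)) (fst m i)"
        using W fi by (metis append.assoc append_Cons append_Nil list.simps(9))
      then show ?thesis using lpath_prefix by metis
    qed
    have hj: "lpath S j (init S j) (lproj M j (sw s0) @ map Send v @ [Recv b]) (fst c j)"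
    proof -
      have "lpath S j (fst m j) [Recv b] (fst c j)" using trj by simp
      then show ?thesis using W lpath_append unfolding v_def by (metis append.assoc)
    qed
    have vv: "\<forall>a\<in>set v. src M a = j \<and> a \<in> msgs M" using musm by (auto simp: v_def)
    have C: "lpath S j (init S j) (lproj M j (sw s0) @ Recv b # map Send v) (fst c j)"
      using lemC[OF ms sy bm i_def[symmetric] j_def[symmetric] vv hs0 hi hj] .
    have "run M S (conf0 S) (sw (s0 @ [b]) @ map Send us') c"
      unfolding run_iff
    proof
      show "\<forall>p. lpath S p (fst (conf0 S) p) (lproj M p (sw (s0 @ [b]) @ map Send us')) (fst c p)"
      proof
        fix p
        have lp: "lproj M p (sw (s0 @ [b]) @ map Send us') = lproj M p (sw s0) @
           (if p = i then [Send b] else []) @ (if p = j then [Recv b] else []) @ map Send (filter (\<lambda>a. src M a = p) us')"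
          using ij by (simp add: lproj_map_Send i_def j_def)
        show "lpath S p (fst (conf0 S) p) (lproj M p (sw (s0 @ [b]) @ map Send us')) (fst c p)"
        proof (cases "p = j")
          case True
          then show ?thesis using C lp ij fp[of j] by (simp add: v_def)
        next
          case pj: False
          then have fcp: "fst c p = fst m p" using fc by (metis fun_upd_other)
          show ?thesis
          proof (cases "p = i")
            case True
            then show ?thesis using W[rule_format, of i] lp pj fcp fi fi' by simp
          next
            case False
            then show ?thesis using W[rule_format, of p] lp pj fcp fp[of p] by simp
          qed
        qed
      qed
    next
      have c1: "chans M e (sw (s0 @ [b])) = Some e" by (rule chans_sw) (simp add: e_def)
      have "chans M e (sw (s0 @ [b]) @ map Send us') = chans M e (map Send us')"
        unfolding chans_append c1 by simp
      also have "\<dots> = Some (\<lambda>k l. filter (\<lambda>a. src M a = k \<and> dst M a = l) us')"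
        using chans_sends[of M e us'] by (simp add: e_def)
      finally have "chans M (snd (conf0 S)) (sw (s0 @ [b]) @ map Send us') =
            Some (\<lambda>k l. filter (\<lambda>a. src M a = k \<and> dst M a = l) us')" by (simp add: e_def)
      moreover have "(\<lambda>k l. filter (\<lambda>a. src M a = k \<and> dst M a = l) us') = snd c"
      proof (intro ext)
        fix k l
        show "filter (\<lambda>a. src M a = k \<and> dst M a = l) us' = snd c k l"
        proof (cases "k = i \<and> l = j")
          case True
          then show ?thesis using n1 ys sc by (simp add: us'_def P_def)
        next
          case False
          then have "snd c k l = snd m k l" using sc by auto
          then show ?thesis using False sm us by (auto simp: us'_def i_def j_def)
        qed
      qed
      ultimately show "chans M (snd (conf0 S)) (sw (s0 @ [b]) @ map Send us') = Some (snd c)" by simp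
    qed
    then show ?thesis by blast
  qed
qed


theorem lemma4p11:
  fixes M :: "'m msgset" and S :: "('m, 's) system"
  assumes "is_msgset M" and "oriented_ring M"
    and "is_system M S" and "synchronizable1 M S"
    and "t \<in> T_omega M S"
  shows "\<exists>tN. normalized M tN \<and> tN \<in> T_omega M S \<and> equiv_S M S t tN"
proof -
  from assms(5) obtain k where "t \<in> T M S k" by (auto simp: T_omega_def)
  then obtain c where rc: "run M S (conf0 S) t c" by (auto simp: T_def reachable_trace_def)
  obtain s0 us where R: "run M S (conf0 S) (sw s0 @ map Send us) c"
    using main_good[OF assms(1-4) rc] by blast
  have musm: "set us \<subseteq> msgs M"
  proof
    fix a assume "a \<in> set us"
    then have "Send a \<in> set (sw s0 @ map Send us)" by simp
    then show "a \<in> msgs M" using run_msgs[OF assms(3) R] by fastforce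
  qed
  have "normalized M (sw s0 @ map Send us)"
    unfolding normalized_def using is_sync_sw' musm by blast
  moreover have "sw s0 @ map Send us \<in> T_omega M S" using reach_Tomega[OF R] .
  moreover have "equiv_S M S t (sw s0 @ map Send us)"
    unfolding equiv_S_def using assms(5) calculation(2) rc R by blast
  ultimately show ?thesis by blast
qed

end
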